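(* Let $\mathscr T$ be a functor satisfying (T1)–(T4). Then $\Gamma$, defined on objects by $\Gamma(\mathcal M)=\mathscr P(\mathscr T(\mathbf{Lin}(\mathcal M)))$ and on morphisms by $\Gamma(k)(A)=\{k\circ a\circ k^{-1}\mid a\in A\}$, is a functor from $\mathbb{COL}$ to $\mathscr T\mathbb{ODA}$.
   Context: An involutive unital quantale is $(Q,\bigsqcup,\odot,{}^*,e)$: complete join-semilattice $Q$, associative $\odot$ distributing over arbitrary joins in each argument, unit $e$, ${}^*$ with $x^{**}=x$, $(x\odot y)^*=y^*\odot x^*$, $(\bigsqcup x_i)^*=\bigsqcup x_i^*$. An involutive generalized dynamic algebra (IDA) is such a quantale with ${\sim}\colon K\to K$ satisfying, for all $x,y$ and families $(x_i)$: ${\sim}(x\odot{\sim}{\sim}y)={\sim}(x\odot y)$; ${\sim}(\bigsqcup{\sim}{\sim}x_i)={\sim}(\bigsqcup x_i)$; $({\sim}x)^*={\sim}x$; ${\sim}{\sim}({\sim}{\sim}x\odot y)={\sim}({\sim}x\sqcup{\sim}({\sim}x\sqcup y))$. Test set $\widetilde K=\{{\sim}k\}$; $\bigvee W={\sim}{\sim}\bigsqcup W$; $w^\perp={\sim}w$; $k\preceq l$ iff $\bigvee\{k,l\}=l$; $k\bullet v={\sim}{\sim}(k\odot v)$; $k\equiv l$ iff $k\bullet w=l\bullet w$ for all $w\in\widetilde K$. IDA morphisms preserve arbitrary joins, $\odot$, ${}^*$, unit, ${\sim}$ (category $\mathbb{IDA}$); semi-Foulis means $(\widetilde K,\preceq,{}^\perp)$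 is a complete orthomodular lattice. $\mathbb{IM}$: involutive monoids and homomorphisms. For a complete orthomodular lattice $\mathcal M$: $\pi_m(x)=m\wedge(m^\perp\vee x)$; $\mathbf{Lin}(\mathcal M)$ is the set of maps $f$ admitting $f^*$ with $f(x)\le y^\perp\iff x\le f^*(y)^\perp$, an IDA under pointwise joins, composition, ${}^*$, $\mathrm{id}$, ${\sim}f=\pi_{f(1)^\perp}$. For an involutive submonoid $L\supseteq\{\pi_m\}$, $\mathscr P(L)$ is the IDA of subsets of $L$ with union, $A\odot B=\{a\circ b\}$, $A^*=\{a^*\}$, unit $\{\mathrm{id}_M\}$, ${\sim}A=\{\pi_{(\bigvee_{a\in A}a(1))^\perp}\}$. $\mathscr T\colon\mathbb{IDA}\to\mathbb{IM}$ satisfies: (T1) $\widetilde K\subseteq\mathscr T(K)\subseteq K$, $\mathscr T(K)$ an involutive submonoid; (T2) for semi-Foulis $\mathfrak K$ with $s=t\iff s\equiv t$ on $\mathscr T(K)$, $k\mapsto k\bullet(-)$ is an isomorphism $\mathscr T(\mathfrak K)\to\mathscr T(\mathbf{Lin}(\widetilde{\mathfrak K}))$; (T3) $f\mapsto\{f\}$ is an isomorphism $\mathscr T(\mathbf{Lin}(\mathcal M))\to\mathscr T(\mathscr P(\mathscr T(\mathbf{Lin}(\mathcal M))))$; (T4) $\mathscr T(f)$ is the restriction of $f$. A $\mathscr T$-based orthomodular dynamic algebra is an IDA with: (TODA1) $(\widetilde K,\preceq,{}^\perp)$ a complete orthomodular lattice; (TODA2) every $A$ with $\mathscr T(K)\subseteq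 A\subseteq K$ closed under $\odot$, ${}^*$, arbitrary joins equals $K$; (TODA3) for $S,T\subseteq\mathscr T(K)$, $\bigsqcup S=\bigsqcup T$ iff $S=T$; (TODA4) for $s,t\in\mathscr T(K)$, $s=t$ iff $s\equiv t$. $\mathscr T\mathbb{ODA}$: these objects with bijective IDA morphisms. $\mathbb{COL}$: complete orthomodular lattices with ortholattice isomorphisms (bijections $g$ with $m\le n\iff g(m)\le g(n)$, $g(m^\perp)=g(m)^\perp$). *)

theory Defs
  imports Main
begin

definition o_is_lub :: "'a set \<Rightarrow> ('a \<Rightarrow> 'a \<Rightarrow> bool) \<Rightarrow> 'a set \<Rightarrow> 'a \<Rightarrow> bool" where
  "o_is_lub C le S s \<longleftrightarrow> s \<in> C \<and> (\<forall>x\<in>S. le x s) \<and> (\<forall>u\<in>C. (\<forall>x\<in>S. le x u) \<longrightarrow> le s u)"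

definition o_is_glb :: "'a set \<Rightarrow> ('a \<Rightarrow> 'a \<Rightarrow> bool) \<Rightarrow> 'a set \<Rightarrow> 'a \<Rightarrow> bool" where
  "o_is_glb C le S s \<longleftrightarrow> s \<in> C \<and> (\<forall>x\<in>S. le s x) \<and> (\<forall>u\<in>C. (\<forall>x\<in>S. le u x) \<longrightarrow> le u s)"

definition o_lub :: "'a set \<Rightarrow> ('a \<Rightarrow> 'a \<Rightarrow> bool) \<Rightarrow> 'a set \<Rightarrow> 'a" where
  "o_lub C le S = (THE s. o_is_lub C le S s)"

definition o_glb :: "'a set \<Rightarrow> ('a \<Rightarrow> 'a \<Rightarrow> bool) \<Rightarrow> 'a set \<Rightarrow> 'a" where
  "o_glb C le S = (THE s. o_is_glb C le S s)"

definition o_top :: "'a set \<Rightarrow> ('a \<Rightarrow> 'a \<Rightarrow> bool) \<Rightarrow> 'a" where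
  "o_top C le = o_lub C le C"

definition o_bot :: "'a set \<Rightarrow> ('a \<Rightarrow> 'a \<Rightarrow> bool) \<Rightarrow> 'a" where
  "o_bot C le = o_lub C le {}"

definition o_partial_order :: "'a set \<Rightarrow> ('a \<Rightarrow> 'a \<Rightarrow> bool) \<Rightarrow> bool" where
  "o_partial_order C le \<longleftrightarrow>
     (\<forall>x\<in>C. le x x) \<and>
     (\<forall>x\<in>C. \<forall>y\<in>C. le x y \<and> le y x \<longrightarrow> x = y) \<and>
     (\<forall>x\<in>C. \<forall>y\<in>C. \<forall>z\<in>C. le x y \<and> le y z \<longrightarrow> le x z)"

definition o_complete_lattice :: "'a set \<Rightarrow> ('a \<Rightarrow> 'a \<Rightarrow> bool) \<Rightarrow> bool" where
  "o_complete_lattice C le \<longleftrightarrow> o_partial_order C le \<and> (\<forall>S\<subseteq>C. \<exists>s. o_is_lub C le S s)"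

definition col :: "'a set \<Rightarrow> ('a \<Rightarrow> 'a \<Rightarrow> bool) \<Rightarrow> ('a \<Rightarrow> 'a) \<Rightarrow> bool" where
  "col C le perp \<longleftrightarrow>
     o_complete_lattice C le \<and>
     (\<forall>x\<in>C. perp x \<in> C \<and> perp (perp x) = x) \<and>
     (\<forall>x\<in>C. \<forall>y\<in>C. le x y \<longrightarrow> le (perp y) (perp x)) \<and>
     (\<forall>x\<in>C. o_lub C le {x, perp x} = o_top C le \<and> o_glb C le {x, perp x} = o_bot C le) \<and>
     (\<forall>x\<in>C. \<forall>y\<in>C. le x y \<longrightarrow> y = o_lub C le {x, o_glb C le {y, perp x}})"

definition col_iso :: "('a \<Rightarrow> 'a \<Rightarrow> bool) \<Rightarrow> ('a \<Rightarrow> 'a) \<Rightarrow> ('b \<Rightarrow> 'b \<Rightarrow> bool) \<Rightarrow> ('b \<Rightarrow> 'b) \<Rightarrow> ('a \<Rightarrow> 'b) \<Rightarrow> bool" where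
  "col_iso le perp le' perp' g \<longleftrightarrow> bij g \<and> (\<forall>m n. le m n \<longleftrightarrow> le' (g m) (g n)) \<and> (\<forall>m. g (perp m) = perp' (g m))"

section \<open>Involutive generalized dynamic algebras\<close>

record 'a ida =
  ida_car :: "'a set"
  ida_join :: "'a set \<Rightarrow> 'a"
  ida_mult :: "'a \<Rightarrow> 'a \<Rightarrow> 'a"
  ida_star :: "'a \<Rightarrow> 'a"
  ida_unit :: "'a"
  ida_neg :: "'a \<Rightarrow> 'a"

definition cjsl :: "'a set \<Rightarrow> ('a set \<Rightarrow> 'a) \<Rightarrow> bool" where
  "cjsl C J \<longleftrightarrow> (\<forall>S\<subseteq>C. J S \<in> C) \<and> o_partial_order C (\<lambda>x y. J {x, y} = y) \<and>
     (\<forall>S\<subseteq>C. o_is_lub C (\<lambda>x y. J {x, y} = y) S (J S))"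

definition ida :: "'a ida \<Rightarrow> bool" where
  "ida K \<longleftrightarrow>
    (let C = ida_car K; J = ida_join K; m = ida_mult K; s = ida_star K; e = ida_unit K; n = ida_neg K in
     cjsl C J \<and>
     (\<forall>x\<in>C. \<forall>y\<in>C. m x y \<in> C) \<and>
     (\<forall>x\<in>C. \<forall>y\<in>C. \<forall>z\<in>C. m (m x y) z = m x (m y z)) \<and>
     (\<forall>x\<in>C. \<forall>S\<subseteq>C. m x (J S) = J ((\<lambda>y. m x y) ` S) \<and> m (J S) x = J ((\<lambda>y. m y x) ` S)) \<and>
     e \<in> C \<and> (\<forall>x\<in>C. m e x = x \<and> m x e = x) \<and>
     (\<forall>x\<in>C. s x \<in> C \<and> s (s x) = x) \<and>
     (\<forall>x\<in>C. \<forall>y\<in>C. s (m x y) = m (s y) (s x)) \<and>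
     (\<forall>S\<subseteq>C. s (J S) = J (s ` S)) \<and>
     (\<forall>x\<in>C. n x \<in> C) \<and>
     (\<forall>x\<in>C. \<forall>y\<in>C. n (m x (n (n y))) = n (m x y)) \<and>
     (\<forall>S\<subseteq>C. n (J ((\<lambda>x. n (n x)) ` S)) = n (J S)) \<and>
     (\<forall>x\<in>C. s (n x) = n x) \<and>
     (\<forall>x\<in>C. \<forall>y\<in>C. n (n (m (n (n x)) y)) = n (J {n x, n (J {n x, y})})))"

definition tests :: "'a ida \<Rightarrow> 'a set" where
  "tests K = ida_neg K ` ida_car K"

definition tvee :: "'a ida \<Rightarrow> 'a set \<Rightarrow> 'a" where
  "tvee K W = ida_neg K (ida_neg K (ida_join K W))"

definition tle :: "'a ida \<Rightarrow> 'a \<Rightarrow> 'a \<Rightarrow> bool" where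
  "tle K k l \<longleftrightarrow> tvee K {k, l} = l"

definition bullet :: "'a ida \<Rightarrow> 'a \<Rightarrow> 'a \<Rightarrow> 'a" where
  "bullet K k v = ida_neg K (ida_neg K (ida_mult K k v))"

definition tequiv :: "'a ida \<Rightarrow> 'a \<Rightarrow> 'a \<Rightarrow> bool" where
  "tequiv K k l \<longleftrightarrow> (\<forall>w\<in>tests K. bullet K k w = bullet K l w)"

definition semi_foulis :: "'a ida \<Rightarrow> bool" where
  "semi_foulis K \<longleftrightarrow> ida K \<and> col (tests K) (tle K) (ida_neg K)"

definition ida_hom :: "'a ida \<Rightarrow> 'b ida \<Rightarrow> ('a \<Rightarrow> 'b) \<Rightarrow> bool" where
  "ida_hom K L f \<longleftrightarrow>
     f ` ida_car K \<subseteq> ida_car L \<and>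
     (\<forall>S\<subseteq>ida_car K. f (ida_join K S) = ida_join L (f ` S)) \<and>
     (\<forall>x\<in>ida_car K. \<forall>y\<in>ida_car K. f (ida_mult K x y) = ida_mult L (f x) (f y)) \<and>
     (\<forall>x\<in>ida_car K. f (ida_star K x) = ida_star L (f x)) \<and>
     f (ida_unit K) = ida_unit L \<and>
     (\<forall>x\<in>ida_car K. f (ida_neg K x) = ida_neg L (f x))"

definition inv_submonoid :: "'a ida \<Rightarrow> 'a set \<Rightarrow> bool" where
  "inv_submonoid K A \<longleftrightarrow> A \<subseteq> ida_car K \<and> ida_unit K \<in> A \<and>
     (\<forall>x\<in>A. \<forall>y\<in>A. ida_mult K x y \<in> A) \<and> (\<forall>x\<in>A. ida_star K x \<in> A)"

definition im_iso :: "'a ida \<Rightarrow> 'a set \<Rightarrow> 'b ida \<Rightarrow> 'b set \<Rightarrow> ('a \<Rightarrow> 'b) \<Rightarrow> bool" where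
  "im_iso K A L B h \<longleftrightarrow> bij_betw h A B \<and>
     (\<forall>x\<in>A. \<forall>y\<in>A. h (ida_mult K x y) = ida_mult L (h x) (h y)) \<and>
     (\<forall>x\<in>A. h (ida_star K x) = ida_star L (h x)) \<and>
     h (ida_unit K) = ida_unit L"

section \<open>The IDAs Lin(M) and P(L)\<close>

definition ext_map :: "'a set \<Rightarrow> ('a \<Rightarrow> 'a) \<Rightarrow> bool" where
  "ext_map C f \<longleftrightarrow> (\<forall>x\<in>C. f x \<in> C) \<and> (\<forall>x. x \<notin> C \<longrightarrow> f x = x)"

definition is_adjoint :: "'a set \<Rightarrow> ('a \<Rightarrow> 'a \<Rightarrow> bool) \<Rightarrow> ('a \<Rightarrow> 'a) \<Rightarrow> ('a \<Rightarrow> 'a) \<Rightarrow> ('a \<Rightarrow> 'a) \<Rightarrow> bool" where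
  "is_adjoint C le perp f g \<longleftrightarrow> (\<forall>x\<in>C. \<forall>y\<in>C. le (f x) (perp y) \<longleftrightarrow> le x (perp (g y)))"

definition proj :: "'a set \<Rightarrow> ('a \<Rightarrow> 'a \<Rightarrow> bool) \<Rightarrow> ('a \<Rightarrow> 'a) \<Rightarrow> 'a \<Rightarrow> 'a \<Rightarrow> 'a" where
  "proj C le perp m x = (if x \<in> C then o_glb C le {m, o_lub C le {perp m, x}} else x)"

definition lin_car :: "'a set \<Rightarrow> ('a \<Rightarrow> 'a \<Rightarrow> bool) \<Rightarrow> ('a \<Rightarrow> 'a) \<Rightarrow> ('a \<Rightarrow> 'a) set" where
  "lin_car C le perp = {f. ext_map C f \<and> (\<exists>g. ext_map C g \<and> is_adjoint C le perp f g)}"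

definition lin_adj :: "'a set \<Rightarrow> ('a \<Rightarrow> 'a \<Rightarrow> bool) \<Rightarrow> ('a \<Rightarrow> 'a) \<Rightarrow> ('a \<Rightarrow> 'a) \<Rightarrow> ('a \<Rightarrow> 'a)" where
  "lin_adj C le perp f = (THE g. ext_map C g \<and> is_adjoint C le perp f g)"

definition Lin :: "'a set \<Rightarrow> ('a \<Rightarrow> 'a \<Rightarrow> bool) \<Rightarrow> ('a \<Rightarrow> 'a) \<Rightarrow> ('a \<Rightarrow> 'a) ida" where
  "Lin C le perp =
    \<lparr> ida_car = lin_car C le perp,
      ida_join = (\<lambda>S x. if x \<in> C then o_lub C le ((\<lambda>f. f x) ` S) else x),
      ida_mult = (\<lambda>f g. f \<circ> g),
      ida_star = lin_adj C le perp,
      ida_unit = id,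
      ida_neg = (\<lambda>f. proj C le perp (perp (f (o_top C le)))) \<rparr>"

definition Pw :: "'a set \<Rightarrow> ('a \<Rightarrow> 'a \<Rightarrow> bool) \<Rightarrow> ('a \<Rightarrow> 'a) \<Rightarrow> ('a \<Rightarrow> 'a) set \<Rightarrow> ('a \<Rightarrow> 'a) set ida" where
  "Pw C le perp L =
    \<lparr> ida_car = Pow L,
      ida_join = (\<lambda>S. \<Union>S),
      ida_mult = (\<lambda>A B. {a \<circ> b | a b. a \<in> A \<and> b \<in> B}),
      ida_star = (\<lambda>A. lin_adj C le perp ` A),
      ida_unit = {id},
      ida_neg = (\<lambda>A. {proj C le perp (perp (o_lub C le ((\<lambda>a. a (o_top C le)) ` A)))}) \<rparr>"

section \<open>The conditions (T1)--(T4) on the object part of the functor T\<close>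

definition T_ax1 :: "('a ida \<Rightarrow> 'a set) \<Rightarrow> bool" where
  "T_ax1 T \<longleftrightarrow> (\<forall>K. ida K \<longrightarrow> tests K \<subseteq> T K \<and> inv_submonoid K (T K))"

definition T_ax2 :: "('a ida \<Rightarrow> 'a set) \<Rightarrow> (('a \<Rightarrow> 'a) ida \<Rightarrow> ('a \<Rightarrow> 'a) set) \<Rightarrow> bool" where
  "T_ax2 TK TL \<longleftrightarrow>
    (\<forall>K. semi_foulis K \<and> (\<forall>s\<in>TK K. \<forall>t\<in>TK K. s = t \<longleftrightarrow> tequiv K s t) \<longrightarrow>
       im_iso K (TK K) (Lin (tests K) (tle K) (ida_neg K)) (TL (Lin (tests K) (tle K) (ida_neg K)))
         (\<lambda>k v. if v \<in> tests K then bullet K k v else v))"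

definition T_ax3 :: "(('a \<Rightarrow> 'a) ida \<Rightarrow> ('a \<Rightarrow> 'a) set) \<Rightarrow> (('a \<Rightarrow> 'a) set ida \<Rightarrow> ('a \<Rightarrow> 'a) set set) \<Rightarrow> bool" where
  "T_ax3 TL TP \<longleftrightarrow>
    (\<forall>C le perp. col C le perp \<longrightarrow>
       im_iso (Lin C le perp) (TL (Lin C le perp))
              (Pw C le perp (TL (Lin C le perp))) (TP (Pw C le perp (TL (Lin C le perp))))
              (\<lambda>f. {f}))"

text \<open>(T4): T(f) is the restriction of f; in particular f maps T(K) into T(L).\<close>
definition T_ax4 :: "('a ida \<Rightarrow> 'a set) \<Rightarrow> ('b ida \<Rightarrow> 'b set) \<Rightarrow> bool" where
  "T_ax4 T T' \<longleftrightarrow> (\<forall>K L f. ida K \<and> ida L \<and> ida_hom K L f \<longrightarrow> f ` T K \<subseteq> T' L)"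

section \<open>T-based orthomodular dynamic algebras and the functor Gamma\<close>

definition ida_closed :: "'a ida \<Rightarrow> 'a set \<Rightarrow> bool" where
  "ida_closed K A \<longleftrightarrow> (\<forall>x\<in>A. \<forall>y\<in>A. ida_mult K x y \<in> A) \<and> (\<forall>x\<in>A. ida_star K x \<in> A) \<and>
     (\<forall>S\<subseteq>A. ida_join K S \<in> A)"

definition toda :: "('a ida \<Rightarrow> 'a set) \<Rightarrow> 'a ida \<Rightarrow> bool" where
  "toda T K \<longleftrightarrow> ida K \<and>
     col (tests K) (tle K) (ida_neg K) \<and>
     (\<forall>A. T K \<subseteq> A \<and> A \<subseteq> ida_car K \<and> ida_closed K A \<longrightarrow> A = ida_car K) \<and>
     (\<forall>S U. S \<subseteq> T K \<and> U \<subseteq> T K \<longrightarrow> (ida_join K S = ida_join K U \<longleftrightarrow> S = U)) \<and>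
     (\<forall>s\<in>T K. \<forall>t\<in>T K. s = t \<longleftrightarrow> tequiv K s t)"

definition toda_morph :: "'a ida \<Rightarrow> 'b ida \<Rightarrow> ('a \<Rightarrow> 'b) \<Rightarrow> bool" where
  "toda_morph K L f \<longleftrightarrow> ida_hom K L f \<and> bij_betw f (ida_car K) (ida_car L)"

text \<open>Gamma on objects: a COL object is a complete OML whose carrier is a whole type.\<close>
definition Gamma :: "(('a \<Rightarrow> 'a) ida \<Rightarrow> ('a \<Rightarrow> 'a) set) \<Rightarrow> ('a \<Rightarrow> 'a \<Rightarrow> bool) \<Rightarrow> ('a \<Rightarrow> 'a) \<Rightarrow> ('a \<Rightarrow> 'a) set ida" where
  "Gamma TL le perp = Pw UNIV le perp (TL (Lin UNIV le perp))"

definition gamma_map :: "('a \<Rightarrow> 'b) \<Rightarrow> ('a \<Rightarrow> 'a) set \<Rightarrow> ('b \<Rightarrow> 'b) set" where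
  "gamma_map k A = (\<lambda>a. k \<circ> a \<circ> inv k) ` A"

end

theory Submission
  imports Defs
begin

locale cu =
  fixes le :: "'a \<Rightarrow> 'a \<Rightarrow> bool" and perp :: "'a \<Rightarrow> 'a"
  assumes colA: "col UNIV le perp"
begin

definition Sp where "Sp S = o_lub UNIV le S"
definition Ip where "Ip S = o_glb UNIV le S"
definition sp where "sp x y = Sp {x, y}"
definition ip where "ip x y = Ip {x, y}"
definition tp where "tp = Sp UNIV"
definition bt where "bt = Sp {}"
definition ls where "ls x y = (le x y \<and> \<not> le y x)"

lemma ocl: "o_complete_lattice UNIV le" using colA unfolding col_def by (rule conjunct1)
lemma po: "o_partial_order UNIV le" using ocl unfolding o_complete_lattice_def by (rule conjunct1)
lemma refl: "le x x" using po unfolding o_partial_order_def by auto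
lemma antisym: "le x y \<Longrightarrow> le y x \<Longrightarrow> x = y"
proof -
  have "\<forall>x\<in>UNIV. \<forall>y\<in>UNIV. le x y \<and> le y x \<longrightarrow> x = y" using po unfolding o_partial_order_def by (elim conjE)
  then show "le x y \<Longrightarrow> le y x \<Longrightarrow> x = y" by (metis UNIV_I)
qed
lemma trans: "le x y \<Longrightarrow> le y z \<Longrightarrow> le x z"
proof -
  have "\<forall>x\<in>UNIV. \<forall>y\<in>UNIV. \<forall>z\<in>UNIV. le x y \<and> le y z \<longrightarrow> le x z" using po unfolding o_partial_order_def by (elim conjE)
  then show "le x y \<Longrightarrow> le y z \<Longrightarrow> le x z" by (metis UNIV_I)
qed

lemma lub_ex: "\<exists>s. o_is_lub UNIV le S s" using ocl unfolding o_complete_lattice_def by blast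
lemma lub_uniq: "o_is_lub UNIV le S s \<Longrightarrow> o_is_lub UNIV le S t \<Longrightarrow> s = t"
  unfolding o_is_lub_def using antisym by auto
lemma Sp_is: "o_is_lub UNIV le S (Sp S)"
  unfolding Sp_def o_lub_def using lub_ex lub_uniq by (metis theI)
lemma Sp_upper: "x \<in> S \<Longrightarrow> le x (Sp S)" using Sp_is unfolding o_is_lub_def by auto
lemma Sp_least: "(\<And>x. x \<in> S \<Longrightarrow> le x z) \<Longrightarrow> le (Sp S) z" using Sp_is unfolding o_is_lub_def by auto

lemma glb_is: "o_is_glb UNIV le S (Sp {u. \<forall>x\<in>S. le u x})"
  unfolding o_is_glb_def by (auto intro: Sp_upper Sp_least)
lemma glb_uniq: "o_is_glb UNIV le S s \<Longrightarrow> o_is_glb UNIV le S t \<Longrightarrow> s = t"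
  unfolding o_is_glb_def using antisym by auto
lemma Ip_is: "o_is_glb UNIV le S (Ip S)"
  unfolding Ip_def o_glb_def using glb_is glb_uniq by (metis theI)
lemma Ip_lower: "x \<in> S \<Longrightarrow> le (Ip S) x" using Ip_is unfolding o_is_glb_def by auto
lemma Ip_greatest: "(\<And>x. x \<in> S \<Longrightarrow> le z x) \<Longrightarrow> le z (Ip S)" using Ip_is unfolding o_is_glb_def by auto

lemma CL: "class.complete_lattice Ip Sp ip le ls sp bt tp"
proof -
  have o: "class.order le ls"
    apply unfold_locales
    unfolding ls_def
    apply (rule HOL.refl)
    apply (rule refl)
    apply (erule trans, assumption)
    apply (erule antisym, assumption)
    done
  have a1: "le (ip x y) x" "le (ip x y) y" for x y unfolding ip_def by (rule Ip_lower, simp)+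
  have a2: "le x y \<Longrightarrow> le x z \<Longrightarrow> le x (ip y z)" for x y z unfolding ip_def by (rule Ip_greatest) auto
  have a3: "le x (sp x y)" "le y (sp x y)" for x y unfolding sp_def by (rule Sp_upper, simp)+
  have a4: "le y x \<Longrightarrow> le z x \<Longrightarrow> le (sp y z) x" for x y z unfolding sp_def by (rule Sp_least) auto
  have a5: "Ip {} = tp" unfolding tp_def by (rule antisym; rule Ip_greatest Sp_upper; simp)
  have a6: "Sp {} = bt" unfolding bt_def by (rule HOL.refl)
  show ?thesis
    apply (rule class.complete_lattice.intro)
      apply (rule class.lattice.intro)
       apply (rule class.semilattice_inf.intro, rule o)
       apply (unfold_locales)
    apply (rule a1)
    apply (rule a1)
    apply (erule (1) a2)
    apply (simp add: ls_def)
    apply (rule refl)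
    apply (erule (1) trans)
    apply (erule (1) antisym)
    apply (rule a3)
    apply (rule a3)
    apply (erule (1) a4)
    apply (erule Ip_lower)
    apply (erule Ip_greatest)
    apply (erule Sp_upper)
    apply (erule Sp_least)
    apply (rule a5)
    apply (rule a6)
    done
qed

sublocale L: complete_lattice Ip Sp ip le ls sp bt tp by (rule CL)


lemma olub: "o_lub UNIV le = Sp" by (rule ext, unfold Sp_def, rule HOL.refl)
lemma oglb: "o_glb UNIV le = Ip" by (rule ext, unfold Ip_def, rule HOL.refl)
lemma otop: "o_top UNIV le = tp" unfolding o_top_def olub tp_def by (rule HOL.refl)
lemma obot: "o_bot UNIV le = bt" unfolding o_bot_def olub bt_def by (rule HOL.refl)

lemma cp1: "\<forall>x\<in>UNIV. perp x \<in> UNIV \<and> perp (perp x) = x"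
  by (rule conjunct1[OF conjunct2[OF colA[unfolded col_def]]])
lemma cp2: "\<forall>x\<in>UNIV. \<forall>y\<in>UNIV. le x y \<longrightarrow> le (perp y) (perp x)"
  by (rule conjunct1[OF conjunct2[OF conjunct2[OF colA[unfolded col_def]]]])
lemma cp3: "\<forall>x\<in>UNIV. o_lub UNIV le {x, perp x} = o_top UNIV le \<and> o_glb UNIV le {x, perp x} = o_bot UNIV le"
  by (rule conjunct1[OF conjunct2[OF conjunct2[OF conjunct2[OF colA[unfolded col_def]]]]])
lemma cp4: "\<forall>x\<in>UNIV. \<forall>y\<in>UNIV. le x y \<longrightarrow> y = o_lub UNIV le {x, o_glb UNIV le {y, perp x}}"
  by (rule conjunct2[OF conjunct2[OF conjunct2[OF conjunct2[OF colA[unfolded col_def]]]]])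
lemmas col_parts = cp1 cp2 cp3 cp4

lemma pp[simp]: "perp (perp x) = x" using col_parts(1) by blast
lemma anti: "le x y \<Longrightarrow> le (perp y) (perp x)" using col_parts(2) by blast
lemma anti_iff: "le (perp x) (perp y) \<longleftrightarrow> le y x" by (metis anti pp)
lemma Sp2: "Sp {x, y} = sp x y" unfolding sp_def by (rule HOL.refl)
lemma Ip2: "Ip {x, y} = ip x y" unfolding ip_def by (rule HOL.refl)
lemma compl_sup[simp]: "sp x (perp x) = tp" using col_parts(3) unfolding olub otop Sp2 by blast
lemma compl_inf[simp]: "ip x (perp x) = bt" using col_parts(3) unfolding oglb obot Ip2 by blast
lemma oml: "le x y \<Longrightarrow> y = sp x (ip y (perp x))"
proof -
  assume "le x y"
  then have "y = o_lub UNIV le {x, o_glb UNIV le {y, perp x}}" using col_parts(4) by blast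
  then show ?thesis unfolding olub oglb Sp2 Ip2 .
qed

lemma perp_Sp: "perp (Sp S) = Ip (perp ` S)"
proof (rule antisym)
  show "le (perp (Sp S)) (Ip (perp ` S))"
    by (rule Ip_greatest) (auto intro: anti Sp_upper)
  have "le (Sp S) (perp (Ip (perp ` S)))"
  proof (rule Sp_least)
    fix x assume "x \<in> S"
    then have "le (Ip (perp ` S)) (perp x)" by (intro Ip_lower) auto
    then show "le x (perp (Ip (perp ` S)))" using anti by fastforce
  qed
  then show "le (Ip (perp ` S)) (perp (Sp S))" using anti by fastforce
qed

lemma perp_Ip: "perp (Ip S) = Sp (perp ` S)"
proof -
  have "perp (Sp (perp ` S)) = Ip S" by (simp add: perp_Sp image_image)
  then show ?thesis by (metis pp)
qed

lemma perp_sp: "perp (sp x y) = ip (perp x) (perp y)" using perp_Sp[of "{x,y}"] unfolding Sp2 by simp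
lemma perp_ip: "perp (ip x y) = sp (perp x) (perp y)" using perp_Ip[of "{x,y}"] unfolding Ip2 by simp
lemma perp_tp[simp]: "perp tp = bt"
proof -
  have "perp ` UNIV = UNIV" by (metis pp surjI)
  then show ?thesis using L.Inf_UNIV L.Sup_UNIV perp_Sp by metis
qed
lemma perp_bt[simp]: "perp bt = tp" by (metis perp_tp pp)

lemma oml_dual: "le x y \<Longrightarrow> x = ip y (sp x (perp y))"
proof -
  assume "le x y"
  then have "le (perp y) (perp x)" by (rule anti)
  then have "perp x = sp (perp y) (ip (perp x) y)" using oml by fastforce
  then have "perp (perp x) = perp (sp (perp y) (ip (perp x) y))" by simp
  then show ?thesis by (simp add: perp_sp perp_ip)
qed

definition pj where "pj m x = ip m (sp (perp m) x)"

lemma pj_tp[simp]: "pj m tp = m" by (simp add: pj_def)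

lemma pj_aux: "sp (perp m) (pj m x) = sp (perp m) x"
proof -
  have "le (perp m) (sp (perp m) x)" by simp
  then have "sp (perp m) x = sp (perp m) (ip (sp (perp m) x) (perp (perp m)))" by (rule oml)
  then show ?thesis by (simp add: pj_def L.inf_commute)
qed

lemma galois: "le (pj m x) y \<longleftrightarrow> le x (sp (perp m) (ip m y))"
proof
  assume a: "le (pj m x) y"
  have "le (pj m x) m" by (simp add: pj_def)
  with a have "le (pj m x) (ip m y)" by simp
  then have "le (sp (perp m) (pj m x)) (sp (perp m) (ip m y))" using L.sup_mono L.order_refl by blast
  then have "le (sp (perp m) x) (sp (perp m) (ip m y))" by (simp add: pj_aux)
  then show "le x (sp (perp m) (ip m y))" using L.le_sup_iff by blast
next
  assume a: "le x (sp (perp m) (ip m y))"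
  define u where "u = sp (perp m) (ip m y)"
  have "le (sp (perp m) x) u" using a unfolding u_def by simp
  then have "le (pj m x) (ip m u)" unfolding pj_def using L.inf_mono L.order_refl by blast
  moreover have "ip m u = ip m y"
  proof -
    have "le (ip m y) m" by simp
    then have "ip m y = ip m (sp (ip m y) (perp m))" by (rule oml_dual)
    then show ?thesis unfolding u_def by (simp add: L.sup_commute)
  qed
  ultimately show "le (pj m x) y" using L.order_trans by fastforce
qed

lemma selfadj: "le (pj m x) (perp y) \<longleftrightarrow> le x (perp (pj m y))"
  unfolding galois by (simp add: pj_def perp_ip perp_sp)


lemma swap: "le a (perp b) \<longleftrightarrow> le b (perp a)" using anti_iff[of "perp b" a] by simp

definition adj where "adj f g \<longleftrightarrow> (\<forall>x y. le (f x) (perp y) = le x (perp (g y)))"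

abbreviation "LCar \<equiv> lin_car UNIV le perp"
abbreviation "Ladj \<equiv> lin_adj UNIV le perp"

lemma is_adj_iff: "is_adjoint UNIV le perp f g = adj f g" by (simp add: is_adjoint_def adj_def)
lemma ext_univ: "ext_map UNIV f" by (simp add: ext_map_def)
lemma LC_iff: "f \<in> LCar \<longleftrightarrow> (\<exists>g. adj f g)" by (simp add: lin_car_def ext_univ is_adj_iff)

lemma adj_uniq: assumes "adj f g" "adj f h" shows "g = h"
proof
  fix y
  have e: "le x (perp (g y)) \<longleftrightarrow> le x (perp (h y))" for x using assms unfolding adj_def by metis
  have "perp (g y) = perp (h y)" using e[of "perp (g y)"] e[of "perp (h y)"] L.order_refl antisym by blast
  then show "g y = h y" by (metis pp)
qed

lemma adj_sym: "adj f g \<Longrightarrow> adj g f"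
  unfolding adj_def by (metis swap)

lemma lin_adj_eq: "adj f g \<Longrightarrow> Ladj f = g"
  unfolding lin_adj_def is_adj_iff
  by (rule the_equality) (auto simp: ext_univ intro: adj_uniq)

lemma adj_lin_adj: "f \<in> LCar \<Longrightarrow> adj f (Ladj f)"
  using LC_iff lin_adj_eq by blast

lemma Ladj_LC: "f \<in> LCar \<Longrightarrow> Ladj f \<in> LCar"
  using LC_iff adj_lin_adj adj_sym by blast

lemma Ladj_Ladj: "f \<in> LCar \<Longrightarrow> Ladj (Ladj f) = f"
  using adj_lin_adj adj_sym lin_adj_eq by blast

lemma adjz: "adj f g \<Longrightarrow> le (f x) z \<longleftrightarrow> le x (perp (g (perp z)))"
  unfolding adj_def by (metis pp)

lemma adj_Sp: assumes "adj f g" shows "f (Sp S) = Sp (f ` S)"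
proof -
  have e: "le (f (Sp S)) z \<longleftrightarrow> le (Sp (f ` S)) z" for z
    using adjz[OF assms] by (simp add: L.Sup_le_iff)
  show ?thesis using e[of "f (Sp S)"] e[of "Sp (f ` S)"] L.order_refl antisym by blast
qed

lemma adj_mono: assumes "adj f g" "le x y" shows "le (f x) (f y)"
proof -
  have "le y (perp (g (perp (f y))))" using adjz[OF assms(1)] L.order_refl by blast
  then have "le x (perp (g (perp (f y))))" using assms(2) L.order_trans by blast
  then show ?thesis using adjz[OF assms(1)] by blast
qed

lemma adj_comp: "adj f g \<Longrightarrow> adj f' g' \<Longrightarrow> adj (f \<circ> f') (g' \<circ> g)"
  unfolding adj_def by simp

lemma adj_id: "adj id id" unfolding adj_def by (simp add: swap)

lemma adj_pj: "adj (pj m) (pj m)" unfolding adj_def using selfadj by blast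

lemma adj_join: assumes "\<forall>f\<in>S. adj f (G f)"
  shows "adj (\<lambda>x. Sp ((\<lambda>f. f x) ` S)) (\<lambda>y. Sp ((\<lambda>f. G f y) ` S))"
  unfolding adj_def
proof (intro allI)
  fix x y
  have "le (Sp ((\<lambda>f. f x) ` S)) (perp y) \<longleftrightarrow> (\<forall>f\<in>S. le (f x) (perp y))" by (simp add: L.Sup_le_iff)
  also have "\<dots> \<longleftrightarrow> (\<forall>f\<in>S. le x (perp (G f y)))" using assms unfolding adj_def by blast
  also have "\<dots> \<longleftrightarrow> le x (Ip ((\<lambda>f. perp (G f y)) ` S))" by (simp add: L.le_Inf_iff)
  also have "Ip ((\<lambda>f. perp (G f y)) ` S) = perp (Sp ((\<lambda>f. G f y) ` S))" by (simp add: perp_Sp image_image)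
  finally show "le (Sp ((\<lambda>f. f x) ` S)) (perp y) = le x (perp (Sp ((\<lambda>f. G f y) ` S)))" .
qed

lemma proj_eq: "proj UNIV le perp = pj"
  by (intro ext) (simp add: proj_def olub oglb Sp2 Ip2 pj_def)

lemma pj_LC: "pj m \<in> LCar" using LC_iff adj_pj by blast
lemma Ladj_pj: "Ladj (pj m) = pj m" using lin_adj_eq adj_pj by blast
lemma pj_inj: "pj m = pj n \<Longrightarrow> m = n" by (metis pj_tp)

definition J where "J S = (\<lambda>x. Sp ((\<lambda>f. f x) ` S))"
definition N where "N f = pj (perp (f tp))"

lemma Lin_simps:
  "ida_car (Lin UNIV le perp) = LCar"
  "ida_join (Lin UNIV le perp) = J"
  "ida_mult (Lin UNIV le perp) = (\<circ>)"
  "ida_star (Lin UNIV le perp) = Ladj"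
  "ida_unit (Lin UNIV le perp) = id"
  "ida_neg (Lin UNIV le perp) = N"
  by (simp_all add: Lin_def olub otop proj_eq J_def N_def fun_eq_iff)

lemma J_LC: "S \<subseteq> LCar \<Longrightarrow> J S \<in> LCar"
  unfolding J_def LC_iff using adj_join[of S Ladj] adj_lin_adj by blast

lemma J_tp: "J S tp = Sp ((\<lambda>f. f tp) ` S)" by (simp add: J_def)

lemma J2: "J {f, g} = (\<lambda>x. sp (f x) (g x))" by (simp add: J_def Sp2)

lemma Jle: "J {f, g} = g \<longleftrightarrow> (\<forall>x. le (f x) (g x))"
  unfolding J2 fun_eq_iff by (simp add: L.le_iff_sup)

lemma comp_LC: "f \<in> LCar \<Longrightarrow> g \<in> LCar \<Longrightarrow> f \<circ> g \<in> LCar"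
  unfolding LC_iff using adj_comp by blast

lemma id_LC: "id \<in> LCar" unfolding LC_iff using adj_id by blast

lemma N_LC: "N f \<in> LCar" unfolding N_def by (rule pj_LC)

lemma NN: "N (N y) = pj (y tp)" by (simp add: N_def)

lemma Ladj_comp: "f \<in> LCar \<Longrightarrow> g \<in> LCar \<Longrightarrow> Ladj (f \<circ> g) = Ladj g \<circ> Ladj f"
  by (rule lin_adj_eq, rule adj_comp; rule adj_lin_adj)

lemma Ladj_J: "S \<subseteq> LCar \<Longrightarrow> Ladj (J S) = J (Ladj ` S)"
  unfolding J_def by (rule lin_adj_eq) (simp add: image_image adj_join adj_lin_adj subset_iff)

lemma pj_last: "pj (perp (sp (perp X) (perp (sp (perp X) Y)))) = pj (pj X Y)"
  by (simp add: perp_sp perp_ip pj_def)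

lemma ida_Lin: "ida (Lin UNIV le perp)"
  unfolding ida_def Let_def Lin_simps
proof (intro conjI ballI allI impI)
  show "cjsl LCar J"
    unfolding cjsl_def
  proof (intro conjI allI impI)
    fix S assume "S \<subseteq> LCar" then show "J S \<in> LCar" by (rule J_LC)
  next
    show "o_partial_order LCar (\<lambda>x y. J {x, y} = y)"
      unfolding o_partial_order_def Jle
      by (blast intro: L.order_trans antisym ext)
  next
    fix S assume S: "S \<subseteq> LCar"
    show "o_is_lub LCar (\<lambda>x y. J {x, y} = y) S (J S)"
      unfolding o_is_lub_def Jle using J_LC[OF S]
      by (auto simp: J_def intro: Sp_upper Sp_least)
  qed
next
  fix x y assume "x \<in> LCar" "y \<in> LCar" then show "x \<circ> y \<in> LCar" by (rule comp_LC)
next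
  fix x y z :: "'a \<Rightarrow> 'a" show "x \<circ> y \<circ> z = x \<circ> (y \<circ> z)" by (rule comp_assoc)
next
  fix x S assume x: "x \<in> LCar" and S: "S \<subseteq> LCar"
  show "x \<circ> J S = J ((\<circ>) x ` S)"
    unfolding J_def using adj_Sp[OF adj_lin_adj[OF x]] by (simp add: fun_eq_iff image_image)
  show "J S \<circ> x = J ((\<lambda>y. y \<circ> x) ` S)"
    unfolding J_def by (simp add: fun_eq_iff image_image)
next
  show "id \<in> LCar" by (rule id_LC)
next
  fix x show "id \<circ> x = x" "x \<circ> id = x" by simp_all
next
  fix x assume "x \<in> LCar" then show "Ladj x \<in> LCar" "Ladj (Ladj x) = x" by (simp_all add: Ladj_LC Ladj_Ladj)
next
  fix x y assume "x \<in> LCar" "y \<in> LCar" then show "Ladj (x \<circ> y) = Ladj y \<circ> Ladj x" by (rule Ladj_comp)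
next
  fix S assume "S \<subseteq> LCar" then show "Ladj (J S) = J (Ladj ` S)" by (rule Ladj_J)
next
  fix x show "N x \<in> LCar" by (rule N_LC)
next
  fix x y :: "'a \<Rightarrow> 'a" show "N (x \<circ> N (N y)) = N (x \<circ> y)" by (simp add: NN N_def)
next
  fix S :: "('a \<Rightarrow> 'a) set" show "N (J ((\<lambda>x. N (N x)) ` S)) = N (J S)"
    by (simp add: NN N_def J_tp image_image)
next
  fix x :: "'a \<Rightarrow> 'a" show "Ladj (N x) = N x" by (simp add: N_def Ladj_pj)
next
  fix x y :: "'a \<Rightarrow> 'a"
  show "N (N (N (N x) \<circ> y)) = N (J {N x, N (J {N x, y})})"
    by (simp add: NN J2 N_def pj_last)
qed


definition V where "V A = Sp ((\<lambda>a. a tp) ` A)"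
definition NP where "NP A = {pj (perp (V A))}"
definition MP where "MP A B = {a \<circ> b | a b. a \<in> A \<and> b \<in> B}"

lemma Pw_simps:
  "ida_car (Pw UNIV le perp L) = Pow L"
  "ida_join (Pw UNIV le perp L) = Union"
  "ida_mult (Pw UNIV le perp L) = MP"
  "ida_star (Pw UNIV le perp L) = image Ladj"
  "ida_unit (Pw UNIV le perp L) = {id}"
  "ida_neg (Pw UNIV le perp L) = NP"
  by (simp_all add: Pw_def olub otop proj_eq V_def NP_def MP_def fun_eq_iff)

lemma V_single[simp]: "V {f} = f tp" by (simp add: V_def)
lemma V_pj: "V {pj m} = m" by simp
lemma NPNP: "NP (NP A) = {pj (V A)}" by (simp add: NP_def)
lemma V_Un: "V (A \<union> B) = sp (V A) (V B)" by (simp add: V_def image_Un L.Sup_union_distrib)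
lemma V_Union: "V (\<Union>S) = Sp (V ` S)"
proof (rule antisym)
  show "le (V (\<Union> S)) (Sp (V ` S))" unfolding V_def
  proof (rule Sp_least)
    fix z assume "z \<in> (\<lambda>a. a tp) ` \<Union> S"
    then obtain A a where aA: "A \<in> S" "a \<in> A" "z = a tp" by blast
    have "le z (V A)" unfolding V_def using aA by (intro Sp_upper) auto
    moreover have "le (V A) (Sp (V ` S))" using aA by (intro Sp_upper) auto
    ultimately show "le z (Sp ((\<lambda>A. Sp ((\<lambda>a. a tp) ` A)) ` S))"
      unfolding V_def by (rule L.order_trans)
  qed
  show "le (Sp (V ` S)) (V (\<Union> S))"
  proof (rule Sp_least)
    fix z assume "z \<in> V ` S"
    then obtain A where A: "A \<in> S" "z = V A" by blast
    show "le z (V (\<Union> S))" unfolding A V_def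
    proof (rule Sp_least)
      fix w assume "w \<in> (\<lambda>a. a tp) ` A"
      then show "le w (Sp ((\<lambda>a. a tp) ` \<Union> S))" using A by (intro Sp_upper) auto
    qed
  qed
qed

lemma V_MP: assumes "A \<subseteq> LCar" shows "V (MP A B) = Sp ((\<lambda>a. a (V B)) ` A)"
proof (rule antisym)
  show "le (V (MP A B)) (Sp ((\<lambda>a. a (V B)) ` A))" unfolding V_def MP_def
  proof (rule Sp_least)
    fix z assume "z \<in> (\<lambda>a. a tp) ` {a \<circ> b |a b. a \<in> A \<and> b \<in> B}"
    then obtain a b where ab: "a \<in> A" "b \<in> B" "z = a (b tp)" by auto
    have "le (b tp) (Sp ((\<lambda>a. a tp) ` B))" using ab by (intro Sp_upper) auto
    then have "le z (a (Sp ((\<lambda>a. a tp) ` B)))" using ab adj_mono adj_lin_adj assms by blast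
    moreover have "le (a (Sp ((\<lambda>a. a tp) ` B))) (Sp ((\<lambda>a. a (Sp ((\<lambda>a. a tp) ` B))) ` A))"
      using ab by (intro Sp_upper) auto
    ultimately show "le z (Sp ((\<lambda>a. a (Sp ((\<lambda>a. a tp) ` B))) ` A))" using L.order_trans by blast
  qed
  show "le (Sp ((\<lambda>a. a (V B)) ` A)) (V (MP A B))"
  proof (rule Sp_least)
    fix z assume "z \<in> (\<lambda>a. a (V B)) ` A"
    then obtain a where a: "a \<in> A" "z = a (V B)" by auto
    have "z = Sp ((\<lambda>b. a (b tp)) ` B)"
      using a adj_Sp[OF adj_lin_adj, of a] assms unfolding V_def by (auto simp: image_image)
    also have "le \<dots> (V (MP A B))" unfolding V_def MP_def
    proof (rule Sp_least)
      fix w assume "w \<in> (\<lambda>b. a (b tp)) ` B"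
      then obtain b where b: "b \<in> B" "w = (a \<circ> b) tp" by auto
      have m: "a \<circ> b \<in> {a \<circ> b |a b. a \<in> A \<and> b \<in> B}" using a b by blast
      have "w \<in> (\<lambda>a. a tp) ` {a \<circ> b |a b. a \<in> A \<and> b \<in> B}"
        by (rule image_eqI[where x="a \<circ> b"]) (simp_all only: b(2) m)
      then show "le w (Sp ((\<lambda>a. a tp) ` {a \<circ> b |a b. a \<in> A \<and> b \<in> B}))"
        by (rule Sp_upper)
    qed
    finally show "le z (V (MP A B))" .
  qed
qed

lemma V_empty: "V {} = bt" by (simp add: V_def)
lemma V_insert: "V (insert f A) = sp (f tp) (V A)" by (simp add: V_def)
lemma pj_last'': "perp (sp (perp (sp (perp X) Y)) (perp X)) = pj X Y"
  by (simp add: perp_sp perp_ip pj_def L.inf_commute)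
lemma pj_last': "perp (sp (perp X) (perp (sp (perp X) Y))) = pj X Y"
  by (simp add: perp_sp perp_ip pj_def)


lemma col_transfer:
  fixes h :: "'a \<Rightarrow> 'b" and C' :: "'b set" and le' perp'
  assumes bh: "bij_betw h UNIV C'"
    and ord: "\<And>x y. le' (h x) (h y) \<longleftrightarrow> le x y"
    and pr: "\<And>x. perp' (h x) = h (perp x)"
  shows "col C' le' perp'"
proof -
  have inj: "inj h" and C': "C' = range h" using bh by (auto simp: bij_betw_def)
  have lub: "o_is_lub C' le' T (h (Sp (h -` T)))" if T: "T \<subseteq> C'" for T
  proof -
    have hT: "h ` (h -` T) = T" using T C' by blast
    show ?thesis unfolding o_is_lub_def
    proof (intro conjI ballI impI)
      show "h (Sp (h -` T)) \<in> C'" using C' by blast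
    next
      fix x assume "x \<in> T"
      then obtain a where "x = h a" "a \<in> h -` T" using hT by blast
      then show "le' x (h (Sp (h -` T)))" using ord Sp_upper by simp
    next
      fix u assume "u \<in> C'" and ub: "\<forall>x\<in>T. le' x u"
      then obtain w where w: "u = h w" using C' by blast
      have "le (Sp (h -` T)) w" by (rule Sp_least) (use ub w ord in auto)
      then show "le' (h (Sp (h -` T))) u" using ord w by simp
    qed
  qed
  have glb: "o_is_glb C' le' T (h (Ip (h -` T)))" if T: "T \<subseteq> C'" for T
  proof -
    have hT: "h ` (h -` T) = T" using T C' by blast
    show ?thesis unfolding o_is_glb_def
    proof (intro conjI ballI impI)
      show "h (Ip (h -` T)) \<in> C'" using C' by blast
    next
      fix x assume "x \<in> T"
      then obtain a where "x = h a" "a \<in> h -` T" using hT by blast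
      then show "le' (h (Ip (h -` T))) x" using ord Ip_lower by simp
    next
      fix u assume "u \<in> C'" and ub: "\<forall>x\<in>T. le' u x"
      then obtain w where w: "u = h w" using C' by blast
      have "le w (Ip (h -` T))" by (rule Ip_greatest) (use ub w ord in auto)
      then show "le' u (h (Ip (h -` T)))" using ord w by simp
    qed
  qed
  have antis: "x = y" if xy: "x \<in> C'" "y \<in> C'" "le' x y" "le' y x" for x y
  proof -
    obtain a b where ab: "x = h a" "y = h b" using xy C' by blast
    then have "le a b" "le b a" using xy ord by auto
    then have "a = b" by (rule antisym)
    then show ?thesis using ab by simp
  qed
  have olub: "o_lub C' le' T = h (Sp (h -` T))" if "T \<subseteq> C'" for T
    unfolding o_lub_def
  proof (rule the_equality)
    show "o_is_lub C' le' T (h (Sp (h -` T)))" using lub that .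
    fix s assume "o_is_lub C' le' T s"
    then show "s = h (Sp (h -` T))" using lub[OF that] antis unfolding o_is_lub_def by blast
  qed
  have oglb: "o_glb C' le' T = h (Ip (h -` T))" if "T \<subseteq> C'" for T
    unfolding o_glb_def
  proof (rule the_equality)
    show "o_is_glb C' le' T (h (Ip (h -` T)))" using glb that .
    fix s assume "o_is_glb C' le' T s"
    then show "s = h (Ip (h -` T))" using glb[OF that] antis unfolding o_is_glb_def by blast
  qed
  have pre2: "h -` {h a, h b} = {a, b}" for a b using inj by (auto dest: injD)
  have vC: "h -` C' = UNIV" using C' by auto
  have topC: "o_top C' le' = h tp" unfolding o_top_def using olub[of C'] vC by simp
  have botC: "o_bot C' le' = h bt" unfolding o_bot_def using olub[of "{}"] by simp
  show ?thesis unfolding col_def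
  proof (intro conjI ballI impI)
    show "o_complete_lattice C' le'"
      unfolding o_complete_lattice_def o_partial_order_def
    proof (intro conjI ballI allI impI)
      fix x assume "x \<in> C'" then show "le' x x" using C' ord refl by auto
    next
      fix x y assume "x \<in> C'" "y \<in> C'" "le' x y \<and> le' y x" then show "x = y" using antis by blast
    next
      fix x y z assume "x \<in> C'" "y \<in> C'" "z \<in> C'" "le' x y \<and> le' y z"
      then show "le' x z" using C' ord trans by auto
    next
      fix S assume "S \<subseteq> C'" then show "\<exists>s. o_is_lub C' le' S s" using lub by blast
    qed
  next
    fix x assume "x \<in> C'" then show "perp' x \<in> C'" "perp' (perp' x) = x" using C' pr by auto
  next
    fix x y assume "x \<in> C'" "y \<in> C'" "le' x y" then show "le' (perp' y) (perp' x)"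
      using C' pr ord anti by auto
  next
    fix x assume "x \<in> C'"
    then obtain a where a: "x = h a" using C' by blast
    have s: "{x, perp' x} \<subseteq> C'" using a C' pr by auto
    show "o_lub C' le' {x, perp' x} = o_top C' le'"
      unfolding olub[OF s] topC using a pr pre2 Sp2 by simp
    show "o_glb C' le' {x, perp' x} = o_bot C' le'"
      unfolding oglb[OF s] botC using a pr pre2 Ip2 by simp
  next
    fix x y assume "x \<in> C'" "y \<in> C'" and xy: "le' x y"
    then obtain a b where ab: "x = h a" "y = h b" using C' by blast
    have s1: "{y, perp' x} \<subseteq> C'" using ab C' pr by auto
    have g: "o_glb C' le' {y, perp' x} = h (ip b (perp a))"
      unfolding oglb[OF s1] using ab pr pre2 Ip2 by simp
    have s2: "{x, h (ip b (perp a))} \<subseteq> C'" using ab C' by auto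
    have "le a b" using xy ab ord by simp
    then show "y = o_lub C' le' {x, o_glb C' le' {y, perp' x}}"
      unfolding g olub[OF s2] using ab pre2 Sp2 oml by simp
  qed
qed

end

locale cuL = cu +
  fixes L
  assumes subm: "inv_submonoid (Lin UNIV le perp) L"
    and tst: "tests (Lin UNIV le perp) \<subseteq> L"
begin

lemma L_LC: "L \<subseteq> LCar" using subm unfolding inv_submonoid_def Lin_simps by blast
lemma id_L: "id \<in> L" using subm unfolding inv_submonoid_def Lin_simps by blast
lemma comp_L: "a \<in> L \<Longrightarrow> b \<in> L \<Longrightarrow> a \<circ> b \<in> L" using subm unfolding inv_submonoid_def Lin_simps by blast
lemma Ladj_L: "a \<in> L \<Longrightarrow> Ladj a \<in> L" using subm unfolding inv_submonoid_def Lin_simps by blast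
lemma pj_L: "pj m \<in> L"
proof -
  have "N (pj (perp m)) \<in> tests (Lin UNIV le perp)" unfolding tests_def Lin_simps using pj_LC by blast
  then show ?thesis using tst by (auto simp: N_def)
qed

lemma ida_Pw: "ida (Pw UNIV le perp L)"
  unfolding ida_def Let_def Pw_simps
proof (intro conjI ballI allI impI)
  show "cjsl (Pow L) Union"
  proof -
    have u: "\<And>x y :: ('a \<Rightarrow> 'a) set. \<Union>{x,y} = y \<longleftrightarrow> x \<subseteq> y" by auto
    show ?thesis unfolding cjsl_def o_partial_order_def o_is_lub_def u by blast
  qed
next
  fix x y assume "x \<in> Pow L" "y \<in> Pow L" then show "MP x y \<in> Pow L"
    unfolding MP_def using comp_L by blast
next
  fix x y z :: "('a \<Rightarrow> 'a) set"
  show "MP (MP x y) z = MP x (MP y z)" unfolding MP_def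
  proof (rule set_eqI, rule iffI)
    fix u assume "u \<in> {a \<circ> b |a b. a \<in> {a \<circ> b |a b. a \<in> x \<and> b \<in> y} \<and> b \<in> z}"
    then obtain a b c where abc: "u = (a \<circ> b) \<circ> c" "a \<in> x" "b \<in> y" "c \<in> z" by blast
    then have "u = a \<circ> (b \<circ> c)" by (simp add: comp_assoc)
    then show "u \<in> {a \<circ> b |a b. a \<in> x \<and> b \<in> {a \<circ> b |a b. a \<in> y \<and> b \<in> z}}" using abc by blast
  next
    fix u assume "u \<in> {a \<circ> b |a b. a \<in> x \<and> b \<in> {a \<circ> b |a b. a \<in> y \<and> b \<in> z}}"
    then obtain a b c where abc: "u = a \<circ> (b \<circ> c)" "a \<in> x" "b \<in> y" "c \<in> z" by blast
    then have "u = (a \<circ> b) \<circ> c" by (simp add: comp_assoc)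
    then show "u \<in> {a \<circ> b |a b. a \<in> {a \<circ> b |a b. a \<in> x \<and> b \<in> y} \<and> b \<in> z}" using abc by blast
  qed
next
  fix x S :: "('a \<Rightarrow> 'a) set" and SS :: "('a \<Rightarrow> 'a) set set"
  show "MP x (\<Union>SS) = \<Union> (MP x ` SS)" unfolding MP_def by blast
  show "MP (\<Union>SS) x = \<Union> ((\<lambda>y. MP y x) ` SS)" unfolding MP_def by blast
next
  show "{id} \<in> Pow L" using id_L by simp
next
  fix x :: "('a \<Rightarrow> 'a) set"
  show "MP {id} x = x" "MP x {id} = x" unfolding MP_def by auto
next
  fix x assume x: "x \<in> Pow L"
  then show "Ladj ` x \<in> Pow L" using Ladj_L by blast
  show "Ladj ` Ladj ` x = x" using x L_LC Ladj_Ladj by (force simp: image_image)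
next
  fix x y assume x: "x \<in> Pow L" and y: "y \<in> Pow L"
  have e: "Ladj (a \<circ> b) = Ladj b \<circ> Ladj a" if "a \<in> x" "b \<in> y" for a b
    using that x y L_LC Ladj_comp by blast
  show "Ladj ` MP x y = MP (Ladj ` y) (Ladj ` x)" unfolding MP_def
  proof (rule set_eqI, rule iffI)
    fix u assume "u \<in> Ladj ` {a \<circ> b |a b. a \<in> x \<and> b \<in> y}"
    then obtain a b where ab: "u = Ladj (a \<circ> b)" "a \<in> x" "b \<in> y" by blast
    then have "u = Ladj b \<circ> Ladj a" using e by simp
    then show "u \<in> {a \<circ> b |a b. a \<in> Ladj ` y \<and> b \<in> Ladj ` x}" using ab by blast
  next
    fix u assume "u \<in> {a \<circ> b |a b. a \<in> Ladj ` y \<and> b \<in> Ladj ` x}"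
    then obtain a b where ab: "u = Ladj b \<circ> Ladj a" "a \<in> x" "b \<in> y" by blast
    then have "u = Ladj (a \<circ> b)" using e by simp
    then show "u \<in> Ladj ` {a \<circ> b |a b. a \<in> x \<and> b \<in> y}" using ab by blast
  qed
next
  fix SS :: "('a \<Rightarrow> 'a) set set"
  show "Ladj ` \<Union>SS = \<Union> ((`) Ladj ` SS)" by blast
next
  fix x :: "('a \<Rightarrow> 'a) set" show "NP x \<in> Pow L" unfolding NP_def using pj_L by simp
next
  fix x y assume x: "x \<in> Pow L"
  have "x \<subseteq> LCar" using x L_LC by blast
  then show "NP (MP x (NP (NP y))) = NP (MP x y)"
    unfolding NPNP by (simp add: NP_def V_MP)
next
  fix SS :: "('a \<Rightarrow> 'a) set set"
  show "NP (\<Union> ((\<lambda>x. NP (NP x)) ` SS)) = NP (\<Union>SS)"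
    unfolding NPNP by (simp add: NP_def V_Union image_image)
next
  fix x :: "('a \<Rightarrow> 'a) set" show "Ladj ` NP x = NP x" by (simp add: NP_def Ladj_pj)
next
  fix x y :: "('a \<Rightarrow> 'a) set"
  have "V (MP {pj (V x)} y) = pj (V x) (V y)" using V_MP[of "{pj (V x)}" y] pj_LC by simp
  then show "NP (NP (MP (NP (NP x)) y)) = NP (\<Union> {NP x, NP (\<Union> {NP x, y})})"
    unfolding NPNP by (simp add: V_Un NP_def pj_last' pj_last'' V_insert V_empty)
qed


abbreviation "KP \<equiv> Pw UNIV le perp L"

lemma tests_Pw: "tests KP = range (\<lambda>m. {pj m})"
  unfolding tests_def Pw_simps
proof (rule set_eqI, rule iffI)
  fix x assume "x \<in> NP ` Pow L" then show "x \<in> range (\<lambda>m. {pj m})" unfolding NP_def by blast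
next
  fix x assume "x \<in> range (\<lambda>m. {pj m})"
  then obtain m where m: "x = {pj m}" by blast
  have "x = NP {pj (perp m)}" unfolding m NP_def by simp
  moreover have "{pj (perp m)} \<in> Pow L" using pj_L by simp
  ultimately show "x \<in> NP ` Pow L" by blast
qed

lemma tle_Pw: "tle KP {pj m} {pj n} \<longleftrightarrow> le m n"
proof -
  have "tle KP {pj m} {pj n} \<longleftrightarrow> pj (sp n m) = pj n"
    unfolding tle_def tvee_def Pw_simps NPNP by (simp add: V_insert V_empty)
  also have "\<dots> \<longleftrightarrow> sp n m = n"
  proof
    assume "pj (sp n m) = pj n" then show "sp n m = n" by (rule pj_inj)
  qed simp
  also have "\<dots> \<longleftrightarrow> le m n" using L.le_iff_sup[of m n] L.sup_commute[of m n] by simp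
  finally show ?thesis .
qed

lemma col_tests: "col (tests KP) (tle KP) (ida_neg KP)"
proof (rule col_transfer[where h = "\<lambda>m. {pj m}"])
  show "bij_betw (\<lambda>m. {pj m}) UNIV (tests KP)"
    unfolding tests_Pw bij_betw_def inj_def by (metis pj_tp singleton_inject)
  show "tle KP {pj x} {pj y} \<longleftrightarrow> le x y" for x y by (rule tle_Pw)
  show "ida_neg KP {pj x} = {pj (perp x)}" for x unfolding Pw_simps NP_def by simp
qed

lemma bullet_single: "f \<in> LCar \<Longrightarrow> bullet KP {f} {pj m} = {pj (f m)}"
  unfolding bullet_def Pw_simps NPNP using V_MP[of "{f}" "{pj m}"] by simp

lemma toda_KP:
  assumes TP: "TP KP = (\<lambda>f. {f}) ` L"
  shows "toda TP KP"
  unfolding toda_def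
proof (intro conjI allI impI ballI)
  show "ida KP" by (rule ida_Pw)
  show "col (tests KP) (tle KP) (ida_neg KP)" by (rule col_tests)
next
  fix A assume a: "TP KP \<subseteq> A \<and> A \<subseteq> ida_car KP \<and> ida_closed KP A"
  show "A = ida_car KP"
  proof
    show "A \<subseteq> ida_car KP" using a by blast
    show "ida_car KP \<subseteq> A"
    proof
      fix B assume "B \<in> ida_car KP"
      then have B: "B \<subseteq> L" unfolding Pw_simps by blast
      have "(\<lambda>f. {f}) ` B \<subseteq> TP KP" unfolding TP using B by (rule image_mono)
      then have sub: "(\<lambda>f. {f}) ` B \<subseteq> A" using a by (rule subset_trans[OF _ conjunct1])
      have "ida_join KP ((\<lambda>f. {f}) ` B) \<in> A" using a sub unfolding ida_closed_def by blast
      moreover have "ida_join KP ((\<lambda>f. {f}) ` B) = B" unfolding Pw_simps by blast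
      ultimately show "B \<in> A" by simp
    qed
  qed
next
  fix S U assume a: "S \<subseteq> TP KP \<and> U \<subseteq> TP KP"
  then have sS: "\<forall>x\<in>S. \<exists>f. x = {f}" and sU: "\<forall>x\<in>U. \<exists>f. x = {f}" unfolding TP by blast+
  show "ida_join KP S = ida_join KP U \<longleftrightarrow> S = U"
    unfolding Pw_simps
  proof
    assume e: "\<Union>S = \<Union>U"
    show "S = U"
    proof
      show "S \<subseteq> U"
      proof
        fix x assume x: "x \<in> S"
        then obtain f where f: "x = {f}" using sS by blast
        then have "f \<in> \<Union>U" using e x by blast
        then obtain y where y: "y \<in> U" "f \<in> y" by blast
        then obtain g where "y = {g}" using sU by blast
        then show "x \<in> U" using y f by simp
      qed
      show "U \<subseteq> S"
      proof
        fix x assume x: "x \<in> U"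
        then obtain f where f: "x = {f}" using sU by blast
        then have "f \<in> \<Union>S" using e x by blast
        then obtain y where y: "y \<in> S" "f \<in> y" by blast
        then obtain g where "y = {g}" using sS by blast
        then show "x \<in> S" using y f by simp
      qed
    qed
  qed simp
next
  fix s t assume s: "s \<in> TP KP" and t: "t \<in> TP KP"
  then obtain f g where fg: "s = {f}" "t = {g}" "f \<in> L" "g \<in> L" unfolding TP by blast
  show "s = t \<longleftrightarrow> tequiv KP s t"
  proof
    assume "s = t" then show "tequiv KP s t" unfolding tequiv_def by simp
  next
    assume e: "tequiv KP s t"
    have "f m = g m" for m
    proof -
      have "{pj m} \<in> tests KP" unfolding tests_Pw by blast
      then have "bullet KP {f} {pj m} = bullet KP {g} {pj m}" using e fg unfolding tequiv_def by blast
      moreover have "f \<in> LCar" "g \<in> LCar" using fg L_LC by auto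
      ultimately have "pj (f m) = pj (g m)" using bullet_single by simp
      then show ?thesis by (rule pj_inj)
    qed
    then show "s = t" using fg by auto
  qed
qed

end

locale iso2 = A: cu le perp + B: cu le' perp'
  for le :: "'a \<Rightarrow> 'a \<Rightarrow> bool" and perp and le' :: "'b \<Rightarrow> 'b \<Rightarrow> bool" and perp' +
  fixes k :: "'a \<Rightarrow> 'b"
  assumes iso: "col_iso le perp le' perp' k"
begin

lemma bij_k: "bij k" using iso unfolding col_iso_def by blast
lemma ord_k: "le' (k x) (k y) \<longleftrightarrow> le x y" using iso unfolding col_iso_def by blast
lemma perp_k: "k (perp x) = perp' (k x)" using iso unfolding col_iso_def by blast
lemma kinv1[simp]: "k (inv k y) = y" using bij_k by (simp add: bij_is_surj surj_f_inv_f)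
lemma kinv2[simp]: "inv k (k x) = x" using bij_k by (simp add: bij_is_inj inv_f_f)
lemma ord_inv: "le (inv k x) (inv k y) \<longleftrightarrow> le' x y" using ord_k[of "inv k x" "inv k y"] by simp

lemma k_Sp: "k (A.Sp S) = B.Sp (k ` S)"
proof (rule B.antisym)
  have "le (A.Sp S) (inv k (B.Sp (k ` S)))"
  proof (rule A.Sp_least)
    fix x assume "x \<in> S"
    then have "le' (k x) (B.Sp (k ` S))" by (intro B.Sp_upper) auto
    then show "le x (inv k (B.Sp (k ` S)))" using ord_inv[of "k x"] by simp
  qed
  then show "le' (k (A.Sp S)) (B.Sp (k ` S))" using ord_k[of "A.Sp S" "inv k (B.Sp (k ` S))"] by simp
  show "le' (B.Sp (k ` S)) (k (A.Sp S))"
    by (rule B.Sp_least) (auto simp: ord_k intro: A.Sp_upper)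
qed

lemma k_Ip: "k (A.Ip S) = B.Ip (k ` S)"
proof (rule B.antisym)
  have "le (inv k (B.Ip (k ` S))) (A.Ip S)"
  proof (rule A.Ip_greatest)
    fix x assume "x \<in> S"
    then have "le' (B.Ip (k ` S)) (k x)" by (intro B.Ip_lower) auto
    then show "le (inv k (B.Ip (k ` S))) x" using ord_inv[of _ "k x"] by simp
  qed
  then show "le' (B.Ip (k ` S)) (k (A.Ip S))" using ord_k[of "inv k (B.Ip (k ` S))" "A.Ip S"] by simp
  show "le' (k (A.Ip S)) (B.Ip (k ` S))"
    by (rule B.Ip_greatest) (auto simp: ord_k intro: A.Ip_lower)
qed

lemma k_sp: "k (A.sp x y) = B.sp (k x) (k y)" using k_Sp[of "{x,y}"] by (simp add: A.Sp2 B.Sp2)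
lemma k_ip: "k (A.ip x y) = B.ip (k x) (k y)" using k_Ip[of "{x,y}"] by (simp add: A.Ip2 B.Ip2)
lemma k_tp: "k A.tp = B.tp"
proof -
  have "range k = UNIV" using bij_k by (simp add: bij_is_surj)
  then show ?thesis using k_Sp[of UNIV] A.L.Sup_UNIV B.L.Sup_UNIV by simp
qed
lemma invk_tp: "inv k B.tp = A.tp" using k_tp kinv2 by metis
lemma k_pj: "k (A.pj m x) = B.pj (k m) (k x)" by (simp add: A.pj_def B.pj_def k_sp k_ip perp_k)

definition phi where "phi f = k \<circ> f \<circ> inv k"

lemma phi_pj: "phi (A.pj m) = B.pj (k m)" by (simp add: phi_def fun_eq_iff k_pj)

lemma phi_adj: "A.adj f g \<Longrightarrow> B.adj (phi f) (phi g)"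
  unfolding B.adj_def
proof (intro allI)
  fix x y assume a: "A.adj f g"
  have "le' (phi f x) (perp' y) \<longleftrightarrow> le' (k (f (inv k x))) (k (perp (inv k y)))"
    by (simp add: phi_def perp_k)
  also have "\<dots> \<longleftrightarrow> le (f (inv k x)) (perp (inv k y))" by (rule ord_k)
  also have "\<dots> \<longleftrightarrow> le (inv k x) (perp (g (inv k y)))" using a unfolding A.adj_def by blast
  also have "\<dots> \<longleftrightarrow> le' (k (inv k x)) (k (perp (g (inv k y))))" by (rule ord_k[symmetric])
  also have "\<dots> \<longleftrightarrow> le' x (perp' (phi g y))" by (simp add: phi_def perp_k)
  finally show "le' (phi f x) (perp' y) = le' x (perp' (phi g y))" .
qed

lemma phi_LC: "f \<in> A.LCar \<Longrightarrow> phi f \<in> B.LCar"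
  unfolding A.LC_iff B.LC_iff using phi_adj by blast

lemma phi_Ladj: "f \<in> A.LCar \<Longrightarrow> phi (A.Ladj f) = B.Ladj (phi f)"
  by (rule B.lin_adj_eq[symmetric], rule phi_adj, rule A.adj_lin_adj)

lemma phi_J: "phi (A.J S) = B.J (phi ` S)"
  by (simp add: phi_def A.J_def B.J_def fun_eq_iff k_Sp image_image)

lemma phi_comp: "phi (f \<circ> g) = phi f \<circ> phi g" by (simp add: phi_def fun_eq_iff)
lemma phi_id: "phi id = id" by (simp add: phi_def fun_eq_iff)
lemma phi_N: "phi (A.N f) = B.N (phi f)"
proof -
  have "phi f B.tp = k (f A.tp)" by (simp add: phi_def invk_tp)
  then show ?thesis by (simp add: A.N_def B.N_def phi_pj perp_k)
qed

lemma hom_Lin: "ida_hom (Lin UNIV le perp) (Lin UNIV le' perp') phi"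
  unfolding ida_hom_def A.Lin_simps B.Lin_simps
  using phi_LC phi_J phi_comp phi_Ladj phi_id phi_N by blast

lemma iso_inv: "col_iso le' perp' le perp (inv k)"
  unfolding col_iso_def
proof (intro conjI allI)
  show "bij (inv k)" using bij_k by (rule bij_imp_bij_inv)
  show "le' m n \<longleftrightarrow> le (inv k m) (inv k n)" for m n using ord_inv by simp
  show "inv k (perp' m) = perp (inv k m)" for m
    using perp_k[of "inv k m"] kinv2[of "perp (inv k m)"] by simp
qed

lemma V_phi: "B.V (phi ` x) = k (A.V x)"
  by (simp add: A.V_def B.V_def phi_def image_image invk_tp k_Sp)

lemma hom_Pw:
  assumes La: "La \<subseteq> A.LCar" and Lab: "phi ` La \<subseteq> Lb"
  shows "ida_hom (Pw UNIV le perp La) (Pw UNIV le' perp' Lb) (image phi)"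
  unfolding ida_hom_def A.Pw_simps B.Pw_simps
proof (intro conjI ballI allI impI)
  show "(`) phi ` Pow La \<subseteq> Pow Lb" using Lab by blast
next
  fix SS :: "('a \<Rightarrow> 'a) set set" show "phi ` \<Union>SS = \<Union> ((`) phi ` SS)" by blast
next
  fix x y assume x: "x \<in> Pow La" and y: "y \<in> Pow La"
  show "phi ` A.MP x y = B.MP (phi ` x) (phi ` y)" unfolding A.MP_def B.MP_def
  proof (rule set_eqI, rule iffI)
    fix u assume "u \<in> phi ` {a \<circ> b |a b. a \<in> x \<and> b \<in> y}"
    then obtain a b where ab: "u = phi (a \<circ> b)" "a \<in> x" "b \<in> y" by blast
    then have "u = phi a \<circ> phi b" by (simp add: phi_comp)
    then show "u \<in> {a \<circ> b |a b. a \<in> phi ` x \<and> b \<in> phi ` y}" using ab by blast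
  next
    fix u assume "u \<in> {a \<circ> b |a b. a \<in> phi ` x \<and> b \<in> phi ` y}"
    then obtain a b where ab: "u = phi a \<circ> phi b" "a \<in> x" "b \<in> y" by blast
    then have "u = phi (a \<circ> b)" by (simp add: phi_comp)
    then show "u \<in> phi ` {a \<circ> b |a b. a \<in> x \<and> b \<in> y}" using ab by blast
  qed
next
  fix x assume x: "x \<in> Pow La"
  have "phi (A.Ladj f) = B.Ladj (phi f)" if "f \<in> x" for f using that x La phi_Ladj by blast
  then show "phi ` A.Ladj ` x = B.Ladj ` phi ` x" by (auto simp: image_image image_iff)
next
  show "phi ` {id} = {id}" by (simp add: phi_id)
next
  fix x :: "('a \<Rightarrow> 'a) set"
  show "phi ` A.NP x = B.NP (phi ` x)"
    by (simp add: A.NP_def B.NP_def phi_pj perp_k V_phi)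
qed

end
theorem theorem5p5:
  fixes TKa :: "'a ida \<Rightarrow> 'a set"
    and TLa :: "('a \<Rightarrow> 'a) ida \<Rightarrow> ('a \<Rightarrow> 'a) set"
    and TPa :: "('a \<Rightarrow> 'a) set ida \<Rightarrow> ('a \<Rightarrow> 'a) set set"
    and TKb :: "'b ida \<Rightarrow> 'b set"
    and TLb :: "('b \<Rightarrow> 'b) ida \<Rightarrow> ('b \<Rightarrow> 'b) set"
    and TPb :: "('b \<Rightarrow> 'b) set ida \<Rightarrow> ('b \<Rightarrow> 'b) set set"
  assumes "T_ax1 TKa" "T_ax1 TLa" "T_ax1 TPa" "T_ax1 TKb" "T_ax1 TLb" "T_ax1 TPb"
    and "T_ax2 TKa TLa" "T_ax2 TKb TLb"
    and "T_ax3 TLa TPa" "T_ax3 TLb TPb"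
    and "T_ax4 TKa TKa" "T_ax4 TKa TKb" "T_ax4 TKb TKa" "T_ax4 TKb TKb"
    and "T_ax4 TLa TLa" "T_ax4 TLa TLb" "T_ax4 TLb TLa" "T_ax4 TLb TLb"
    and "T_ax4 TPa TPa" "T_ax4 TPa TPb" "T_ax4 TPb TPa" "T_ax4 TPb TPb"
  shows
    "(\<forall>le perp. col (UNIV :: 'a set) le perp \<longrightarrow> toda TPa (Gamma TLa le perp)) \<and>
     (\<forall>le perp le' perp' (k :: 'a \<Rightarrow> 'b).
        col UNIV le perp \<and> col UNIV le' perp' \<and> col_iso le perp le' perp' k \<longrightarrow>
        toda_morph (Gamma TLa le perp) (Gamma TLb le' perp') (gamma_map k)) \<and>
     (\<forall>le perp. col (UNIV :: 'a set) le perp \<longrightarrow>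
        (\<forall>A\<in>ida_car (Gamma TLa le perp). gamma_map id A = A)) \<and>
     (\<forall>le perp le' perp' (le'' :: 'c \<Rightarrow> 'c \<Rightarrow> bool) perp'' (k :: 'a \<Rightarrow> 'b) (l :: 'b \<Rightarrow> 'c).
        col UNIV le perp \<and> col UNIV le' perp' \<and> col UNIV le'' perp'' \<and>
        col_iso le perp le' perp' k \<and> col_iso le' perp' le'' perp'' l \<longrightarrow>
        (\<forall>A\<in>ida_car (Gamma TLa le perp). gamma_map (l \<circ> k) A = gamma_map l (gamma_map k A)))"
proof (intro conjI allI impI)
  fix le :: "'a \<Rightarrow> 'a \<Rightarrow> bool" and perp
  assume c: "col UNIV le perp"
  interpret A: cu le perp using c by (rule cu.intro)
  have idaL: "ida (Lin UNIV le perp)" by (rule A.ida_Lin)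
  have t1: "tests (Lin UNIV le perp) \<subseteq> TLa (Lin UNIV le perp) \<and> inv_submonoid (Lin UNIV le perp) (TLa (Lin UNIV le perp))"
    using assms(2) idaL unfolding T_ax1_def by blast
  interpret P: cuL le perp "TLa (Lin UNIV le perp)"
    using c t1 by (intro cuL.intro cuL_axioms.intro cu.intro) auto
  have "im_iso (Lin UNIV le perp) (TLa (Lin UNIV le perp))
              (Pw UNIV le perp (TLa (Lin UNIV le perp))) (TPa (Pw UNIV le perp (TLa (Lin UNIV le perp))))
              (\<lambda>f. {f})" using assms(9) c unfolding T_ax3_def by blast
  then have "bij_betw (\<lambda>f. {f}) (TLa (Lin UNIV le perp)) (TPa (Pw UNIV le perp (TLa (Lin UNIV le perp))))"
    unfolding im_iso_def by blast
  then have "TPa (Pw UNIV le perp (TLa (Lin UNIV le perp))) = (\<lambda>f. {f}) ` TLa (Lin UNIV le perp)"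
    by (simp add: bij_betw_def)
  then show "toda TPa (Gamma TLa le perp)" unfolding Gamma_def by (rule P.toda_KP)
next
  fix le :: "'a \<Rightarrow> 'a \<Rightarrow> bool" and perp and le' :: "'b \<Rightarrow> 'b \<Rightarrow> bool" and perp' and k :: "'a \<Rightarrow> 'b"
  assume H: "col UNIV le perp \<and> col UNIV le' perp' \<and> col_iso le perp le' perp' k"
  interpret I: iso2 le perp le' perp' k
    using H by (intro iso2.intro iso2_axioms.intro cu.intro) auto
  interpret J: iso2 le' perp' le perp "inv k"
    using H I.iso_inv by (intro iso2.intro iso2_axioms.intro cu.intro) auto
  have idaA: "ida (Lin UNIV le perp)" by (rule I.A.ida_Lin)
  have idaB: "ida (Lin UNIV le' perp')" by (rule I.B.ida_Lin)
  have s1: "inv_submonoid (Lin UNIV le perp) (TLa (Lin UNIV le perp))"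
    using assms(2) idaA unfolding T_ax1_def by blast
  then have La: "TLa (Lin UNIV le perp) \<subseteq> I.A.LCar"
    unfolding inv_submonoid_def I.A.Lin_simps by blast
  have ab: "I.phi ` TLa (Lin UNIV le perp) \<subseteq> TLb (Lin UNIV le' perp')"
    using assms(16) idaA idaB I.hom_Lin unfolding T_ax4_def by blast
  have ba: "J.phi ` TLb (Lin UNIV le' perp') \<subseteq> TLa (Lin UNIV le perp)"
    using assms(17) idaA idaB J.hom_Lin unfolding T_ax4_def by blast
  have bk: "bij k" by (rule I.bij_k)
  have c1: "J.phi (I.phi f) = f" for f
    using bk by (simp add: I.phi_def J.phi_def inv_inv_eq fun_eq_iff)
  have c2: "I.phi (J.phi g) = g" for g
    using bk by (simp add: I.phi_def J.phi_def inv_inv_eq fun_eq_iff)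
  have bj: "bij_betw I.phi (TLa (Lin UNIV le perp)) (TLb (Lin UNIV le' perp'))"
    by (rule bij_betw_byWitness[where f'="J.phi"]) (use c1 c2 ab ba in auto)
  have gm: "gamma_map k = image I.phi" by (simp add: fun_eq_iff gamma_map_def I.phi_def)
  show "toda_morph (Gamma TLa le perp) (Gamma TLb le' perp') (gamma_map k)"
    unfolding toda_morph_def Gamma_def gm I.A.Pw_simps I.B.Pw_simps
    using I.hom_Pw[OF La ab] bij_betw_image_Pow[OF bj] by blast
next
  fix le :: "'a \<Rightarrow> 'a \<Rightarrow> bool" and perp
  show "\<forall>A\<in>ida_car (Gamma TLa le perp). gamma_map id A = A"
    by (simp add: gamma_map_def)
next
  fix le :: "'a \<Rightarrow> 'a \<Rightarrow> bool" and perp and le' :: "'b \<Rightarrow> 'b \<Rightarrow> bool" and perp'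
    and le'' :: "'c \<Rightarrow> 'c \<Rightarrow> bool" and perp'' and k :: "'a \<Rightarrow> 'b" and l :: "'b \<Rightarrow> 'c"
  assume H: "col UNIV le perp \<and> col UNIV le' perp' \<and> col UNIV le'' perp'' \<and>
        col_iso le perp le' perp' k \<and> col_iso le' perp' le'' perp'' l"
  then have "bij k" "bij l" unfolding col_iso_def by blast+
  then show "\<forall>A\<in>ida_car (Gamma TLa le perp). gamma_map (l \<circ> k) A = gamma_map l (gamma_map k A)"
    by (simp add: gamma_map_def image_image o_inv_distrib comp_assoc)
qed

end
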